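(* Let $(M,g)$ be a pseudo-Riemannian manifold, not conformally flat, with a vector field $A_i$ (non-zero at the points considered) such that $A_iC_{jklm}+A_jC_{kilm}+A_kC_{ijlm}=0$. Then $$C_{lmj}{}^kC_{pqk}{}^j=0\qquad\text{and}\qquad C_{lma}{}^bC_{pqb}{}^cC_{rsc}{}^dC_{tud}{}^a=0.$$
   Context: $(M,g)$ is a connected Hausdorff pseudo-Riemannian manifold of dimension $n\ge 3$ with Levi-Civita connection; indices raised/lowered with $g$, repeated indices summed. $R_{jklm}$ is the Riemann tensor, $R_{kl}=-R_{mkl}{}^m$, $R=R^m{}_m$, and the Weyl tensor is $$C_{jklm}=R_{jklm}+\tfrac{1}{n-2}\big(g_{mj}R_{kl}-g_{mk}R_{jl}+R_{mj}g_{kl}-R_{mk}g_{jl}\big)-\tfrac{R}{(n-1)(n-2)}\big(g_{mj}g_{kl}-g_{mk}g_{jl}\big).$$ *)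

theory Defs
  imports Complex_Main "HOL-Library.Cardinality"
begin

text \<open>Indices range over a finite type 'n
  (the coordinate indices of a chart / frame at a point), n = CARD('n).\<close>

type_synonym 'n tensor2 = "'n \<Rightarrow> 'n \<Rightarrow> real"
type_synonym 'n tensor4 = "'n \<Rightarrow> 'n \<Rightarrow> 'n \<Rightarrow> 'n \<Rightarrow> real"

text \<open>g is a (pseudo-Riemannian) metric at a point: symmetric, with inverse gi
  (gi is the contravariant metric g^{ij}); no signature restriction.\<close>
definition metric_pair :: "('n::finite) tensor2 \<Rightarrow> 'n tensor2 \<Rightarrow> bool" where
  "metric_pair g gi \<longleftrightarrow> (\<forall>i j. g i j = g j i) \<and>
     (\<forall>i j. (\<Sum>k\<in>UNIV. g i k * gi k j) = (if i = j then 1 else 0))"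

text \<open>Algebraic symmetries of the Riemann tensor of a Levi-Civita connection at a point.\<close>
definition curvature_tensor :: "('n::finite) tensor4 \<Rightarrow> bool" where
  "curvature_tensor R \<longleftrightarrow>
     (\<forall>j k l m. R j k l m = - R k j l m) \<and>
     (\<forall>j k l m. R j k l m = - R j k m l) \<and>
     (\<forall>j k l m. R j k l m = R l m j k) \<and>
     (\<forall>j k l m. R j k l m + R k l j m + R l j k m = 0)"

definition ricci :: "('n::finite) tensor2 \<Rightarrow> 'n tensor4 \<Rightarrow> 'n tensor2" where
  "ricci gi R k l = - (\<Sum>m\<in>UNIV. \<Sum>a\<in>UNIV. R m k l a * gi a m)"

definition scal :: "('n::finite) tensor2 \<Rightarrow> 'n tensor4 \<Rightarrow> real" where
  "scal gi R = (\<Sum>m\<in>UNIV. \<Sum>a\<in>UNIV. gi m a * ricci gi R a m)"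

definition weyl :: "('n::finite) tensor2 \<Rightarrow> 'n tensor2 \<Rightarrow> 'n tensor4 \<Rightarrow> 'n tensor4" where
  "weyl g gi R j k l m =
     (let n = real CARD('n); Ric = ricci gi R; S = scal gi R in
      R j k l m
      + (g m j * Ric k l - g m k * Ric j l + Ric m j * g k l - Ric m k * g j l) / (n - 2)
      - S / ((n - 1) * (n - 2)) * (g m j * g k l - g m k * g j l))"

definition raise4 :: "('n::finite) tensor2 \<Rightarrow> 'n tensor4 \<Rightarrow> 'n tensor4" where
  "raise4 gi C j k l m = (\<Sum>a\<in>UNIV. C j k l a * gi a m)"

end

theory Submission
  imports Defs
begin

lemma contract2:
  fixes X N :: "('n::finite) \<Rightarrow> 'n \<Rightarrow> real"
  assumes X: "\<And>j k. X j k = u j * E k + v k * F j"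
    and Nu: "\<And>k. (\<Sum>j\<in>UNIV. u j * N k j) = 0"
    and Nv: "\<And>j. (\<Sum>k\<in>UNIV. v k * N k j) = 0"
  shows "(\<Sum>j\<in>UNIV. \<Sum>k\<in>UNIV. X j k * N k j) = 0"
proof -
  have "(\<Sum>j\<in>UNIV. \<Sum>k\<in>UNIV. X j k * N k j)
      = (\<Sum>k\<in>UNIV. E k * (\<Sum>j\<in>UNIV. u j * N k j)) + (\<Sum>j\<in>UNIV. F j * (\<Sum>k\<in>UNIV. v k * N k j))"
    apply (simp add: X algebra_simps sum.distrib sum_distrib_left)
    apply (subst sum.swap) apply (simp add: algebra_simps)
    done
  then show ?thesis by (simp add: Nu Nv)
qed

lemma contract4:
  fixes X M P N :: "('n::finite) \<Rightarrow> 'n \<Rightarrow> real"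
  assumes X: "\<And>j k. X j k = u j * E k + v k * F j"
    and Nu: "\<And>k. (\<Sum>j\<in>UNIV. u j * N k j) = 0"
    and Mv: "\<And>j. (\<Sum>k\<in>UNIV. v k * M k j) = 0"
  shows "(\<Sum>a\<in>UNIV. \<Sum>b\<in>UNIV. \<Sum>c\<in>UNIV. \<Sum>d\<in>UNIV. X a b * M b c * P c d * N d a) = 0"
proof -
  have 1: "(\<Sum>a\<in>UNIV. \<Sum>b\<in>UNIV. \<Sum>c\<in>UNIV. \<Sum>d\<in>UNIV. u a * E b * M b c * P c d * N d a)
     = (\<Sum>b\<in>UNIV. \<Sum>c\<in>UNIV. \<Sum>d\<in>UNIV. E b * M b c * P c d * (\<Sum>a\<in>UNIV. u a * N d a))"
  proof -
    have "(\<Sum>a\<in>UNIV. \<Sum>b\<in>UNIV. \<Sum>c\<in>UNIV. \<Sum>d\<in>UNIV. u a * E b * M b c * P c d * N d a)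
      = (\<Sum>b\<in>UNIV. \<Sum>a\<in>UNIV. \<Sum>c\<in>UNIV. \<Sum>d\<in>UNIV. u a * E b * M b c * P c d * N d a)"
      by (rule sum.swap)
    also have "\<dots> = (\<Sum>b\<in>UNIV. \<Sum>c\<in>UNIV. \<Sum>a\<in>UNIV. \<Sum>d\<in>UNIV. u a * E b * M b c * P c d * N d a)"
      by (rule sum.cong[OF refl], rule sum.swap)
    also have "\<dots> = (\<Sum>b\<in>UNIV. \<Sum>c\<in>UNIV. \<Sum>d\<in>UNIV. \<Sum>a\<in>UNIV. u a * E b * M b c * P c d * N d a)"
      by (rule sum.cong[OF refl], rule sum.cong[OF refl], rule sum.swap)
    also have "\<dots> = (\<Sum>b\<in>UNIV. \<Sum>c\<in>UNIV. \<Sum>d\<in>UNIV. E b * M b c * P c d * (\<Sum>a\<in>UNIV. u a * N d a))"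
      by (simp add: sum_distrib_left algebra_simps)
    finally show ?thesis .
  qed
  have 2: "(\<Sum>a\<in>UNIV. \<Sum>b\<in>UNIV. \<Sum>c\<in>UNIV. \<Sum>d\<in>UNIV. v b * F a * M b c * P c d * N d a)
     = (\<Sum>a\<in>UNIV. \<Sum>c\<in>UNIV. \<Sum>d\<in>UNIV. F a * P c d * N d a * (\<Sum>b\<in>UNIV. v b * M b c))"
  proof -
    have "(\<Sum>a\<in>UNIV. \<Sum>b\<in>UNIV. \<Sum>c\<in>UNIV. \<Sum>d\<in>UNIV. v b * F a * M b c * P c d * N d a)
      = (\<Sum>a\<in>UNIV. \<Sum>c\<in>UNIV. \<Sum>b\<in>UNIV. \<Sum>d\<in>UNIV. v b * F a * M b c * P c d * N d a)"
      by (rule sum.cong[OF refl], rule sum.swap)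
    also have "\<dots> = (\<Sum>a\<in>UNIV. \<Sum>c\<in>UNIV. \<Sum>d\<in>UNIV. \<Sum>b\<in>UNIV. v b * F a * M b c * P c d * N d a)"
      by (rule sum.cong[OF refl], rule sum.cong[OF refl], rule sum.swap)
    also have "\<dots> = (\<Sum>a\<in>UNIV. \<Sum>c\<in>UNIV. \<Sum>d\<in>UNIV. F a * P c d * N d a * (\<Sum>b\<in>UNIV. v b * M b c))"
      by (simp add: sum_distrib_left algebra_simps)
    finally show ?thesis .
  qed
  have "(\<Sum>a\<in>UNIV. \<Sum>b\<in>UNIV. \<Sum>c\<in>UNIV. \<Sum>d\<in>UNIV. X a b * M b c * P c d * N d a)
     = (\<Sum>a\<in>UNIV. \<Sum>b\<in>UNIV. \<Sum>c\<in>UNIV. \<Sum>d\<in>UNIV. u a * E b * M b c * P c d * N d a)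
     + (\<Sum>a\<in>UNIV. \<Sum>b\<in>UNIV. \<Sum>c\<in>UNIV. \<Sum>d\<in>UNIV. v b * F a * M b c * P c d * N d a)"
    by (simp add: X distrib_right sum.distrib algebra_simps)
  also have "\<dots> = 0" unfolding 1 2 by (simp add: Nu Mv)
  finally show ?thesis .
qed


lemma delta_sum1[simp]:
  fixes f :: "('n::finite) \<Rightarrow> real"
  shows "(\<Sum>k\<in>UNIV. (if k = i then 1 else 0) * f k) = f i"
proof -
  have "(\<lambda>k. (if k = i then 1 else 0) * f k) = (\<lambda>k. if i = k then f i else 0)" by auto
  then show ?thesis unfolding \<open>_ = _\<close> by simp
qed

lemma delta_sum2[simp]:
  fixes f :: "('n::finite) \<Rightarrow> real"
  shows "(\<Sum>k\<in>UNIV. (if i = k then 1 else 0) * f k) = f i"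
proof -
  have "(\<lambda>k. (if i = k then 1 else 0) * f k) = (\<lambda>k. if i = k then f i else 0)" by auto
  then show ?thesis unfolding \<open>_ = _\<close> by simp
qed

lemma delta_sum3[simp]:
  fixes f :: "('n::finite) \<Rightarrow> real"
  shows "(\<Sum>k\<in>UNIV. f k * (if k = i then 1 else 0)) = f i"
  using delta_sum1[of i f] by (simp add: mult.commute)

lemma delta_sum4[simp]:
  fixes f :: "('n::finite) \<Rightarrow> real"
  shows "(\<Sum>k\<in>UNIV. f k * (if i = k then 1 else 0)) = f i"
  using delta_sum2[of i f] by (simp add: mult.commute)

lemma gi_sym:
  assumes "metric_pair g gi" shows "gi i j = gi j i"
proof -
  have gs: "\<And>i j. g i j = g j i" and inv: "\<And>i j. (\<Sum>k\<in>UNIV. g i k * gi k j) = (if i = j then 1 else 0)"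
    using assms by (auto simp: metric_pair_def)
  have t: "\<And>a k. (\<Sum>x\<in>UNIV. gi x a * g x k) = (if k = a then 1 else 0)"
    using inv by (simp add: gs mult.commute)
  have "gi i j = (\<Sum>k\<in>UNIV. (\<Sum>a\<in>UNIV. gi a i * g a k) * gi k j)"
    by (simp add: t)
  also have "\<dots> = (\<Sum>a\<in>UNIV. gi a i * (\<Sum>k\<in>UNIV. g a k * gi k j))"
    by (simp add: sum_distrib_left sum_distrib_right mult.assoc) (rule sum.swap)
  also have "\<dots> = gi j i" by (simp add: inv)
  finally show ?thesis .
qed

lemma gi_g:
  assumes "metric_pair g gi" shows "(\<Sum>k\<in>UNIV. gi i k * g k j) = (if i = j then 1 else 0)"
proof -
  have gs: "\<And>i j. g i j = g j i" and inv: "\<And>i j. (\<Sum>k\<in>UNIV. g i k * gi k j) = (if i = j then 1 else 0)"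
    using assms by (auto simp: metric_pair_def)
  have "(\<Sum>k\<in>UNIV. gi i k * g k j) = (\<Sum>k\<in>UNIV. g j k * gi k i)"
    by (rule sum.cong) (auto simp: gs gi_sym[OF assms, of i] mult.commute)
  then show ?thesis by (simp add: inv)
qed


lemma ricci_sym:
  assumes mp: "metric_pair g gi" and ct: "curvature_tensor R"
  shows "ricci gi R k l = ricci gi R l k"
proof -
  have r: "R m l k a = R a k l m" for m l k a
    using ct unfolding curvature_tensor_def by metis
  have "ricci gi R l k = - (\<Sum>m\<in>UNIV. \<Sum>a\<in>UNIV. R a k l m * gi a m)"
    unfolding ricci_def by (simp add: r)
  also have "\<dots> = - (\<Sum>a\<in>UNIV. \<Sum>m\<in>UNIV. R a k l m * gi a m)"
    by (subst sum.swap) (rule refl)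
  also have "\<dots> = ricci gi R k l"
    unfolding ricci_def by (simp add: gi_sym[OF mp])
  finally show ?thesis by simp
qed

lemma lin_neg: fixes r X Y :: real
  shows "X' = - X \<Longrightarrow> Y' = -Y \<Longrightarrow> r' = -r \<Longrightarrow> r' + X'/d - s*Y' = -(r + X/d - s*Y)"
  by simp

lemma weyl_anti1:
  assumes mp: "metric_pair g gi" and ct: "curvature_tensor R"
  shows "weyl g gi R k j l m = - weyl g gi R j k l m"
proof -
  have gs: "\<And>i j. g i j = g j i" using mp by (auto simp: metric_pair_def)
  have r: "R k j l m = - R j k l m" using ct unfolding curvature_tensor_def by metis
  show ?thesis unfolding weyl_def Let_def
    apply (rule lin_neg[OF _ _ r])
    by (simp_all add: gs ricci_sym[OF mp ct] algebra_simps)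
qed

lemma weyl_anti2:
  assumes mp: "metric_pair g gi" and ct: "curvature_tensor R"
  shows "weyl g gi R j k m l = - weyl g gi R j k l m"
proof -
  have gs: "\<And>i j. g i j = g j i" using mp by (auto simp: metric_pair_def)
  have r: "R j k m l = - R j k l m" using ct unfolding curvature_tensor_def by metis
  show ?thesis unfolding weyl_def Let_def
    apply (rule lin_neg[OF _ _ r])
    by (simp_all add: gs ricci_sym[OF mp ct] algebra_simps)
qed

lemma weyl_pair:
  assumes mp: "metric_pair g gi" and ct: "curvature_tensor R"
  shows "weyl g gi R l m j k = weyl g gi R j k l m"
proof -
  have gs: "\<And>i j. g i j = g j i" using mp by (auto simp: metric_pair_def)
  have r: "R l m j k = R j k l m" using ct unfolding curvature_tensor_def by metis
  have rs: "\<And>a b. ricci gi R a b = ricci gi R b a" using ricci_sym[OF mp ct] .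
  show ?thesis unfolding weyl_def Let_def r
    by (simp add: gs[of l j] gs[of k m] gs[of l k] gs[of j m] rs[of m j] rs[of l j] rs[of k m] rs[of l k] algebra_simps)
qed


lemma weyl_trace:
  fixes g gi :: "('n::finite) tensor2"
  assumes mp: "metric_pair g gi" and ct: "curvature_tensor R" and dim: "CARD('n) \<ge> 3"
  shows "(\<Sum>k\<in>UNIV. \<Sum>m\<in>UNIV. gi k m * weyl g gi R j k l m) = (0::real)"
proof -
  define Ric where "Ric = ricci gi R"
  define S where "S = scal gi R"
  define n where "n = real CARD('n)"
  define c1 where "c1 = 1 / (n - 2)"
  define c2 where "c2 = S / ((n - 1) * (n - 2))"
  have gs: "\<And>i j. g i j = g j i" using mp by (auto simp: metric_pair_def)
  have gis: "\<And>i j. gi i j = gi j i" using gi_sym[OF mp] .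
  have gig: "\<And>i j. (\<Sum>k\<in>UNIV. gi i k * g k j) = (if i = j then 1 else 0)" using gi_g[OF mp] .
  have rs: "\<And>a b. Ric a b = Ric b a" unfolding Ric_def using ricci_sym[OF mp ct] .
  have pt: "gi k m * weyl g gi R j k l m =
      gi k m * R j k l m + c1 * (gi k m * (g m j * Ric k l)) - c1 * (gi k m * (g m k * Ric j l))
      + c1 * (gi k m * (Ric m j * g k l)) - c1 * (gi k m * (Ric m k * g j l))
      - c2 * (gi k m * (g m j * g k l)) + c2 * (gi k m * (g m k * g j l))" for k m
    unfolding weyl_def Let_def Ric_def[symmetric] S_def[symmetric] n_def[symmetric] c1_def c2_def
    by (simp add: algebra_simps add_divide_distrib diff_divide_distrib)
  have split: "(\<Sum>k\<in>UNIV. \<Sum>m\<in>UNIV. gi k m * weyl g gi R j k l m) =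
      (\<Sum>k\<in>UNIV. \<Sum>m\<in>UNIV. gi k m * R j k l m)
      + c1 * (\<Sum>k\<in>UNIV. \<Sum>m\<in>UNIV. gi k m * (g m j * Ric k l))
      - c1 * (\<Sum>k\<in>UNIV. \<Sum>m\<in>UNIV. gi k m * (g m k * Ric j l))
      + c1 * (\<Sum>k\<in>UNIV. \<Sum>m\<in>UNIV. gi k m * (Ric m j * g k l))
      - c1 * (\<Sum>k\<in>UNIV. \<Sum>m\<in>UNIV. gi k m * (Ric m k * g j l))
      - c2 * (\<Sum>k\<in>UNIV. \<Sum>m\<in>UNIV. gi k m * (g m j * g k l))
      + c2 * (\<Sum>k\<in>UNIV. \<Sum>m\<in>UNIV. gi k m * (g m k * g j l))"
    unfolding pt by (simp only: sum.distrib sum_subtractf sum_distrib_left[symmetric])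
  have tR: "(\<Sum>k\<in>UNIV. \<Sum>m\<in>UNIV. gi k m * R j k l m) = Ric j l"
  proof -
    have r: "\<And>k. R j k l m = - R k j l m" for m using ct unfolding curvature_tensor_def by metis
    show ?thesis unfolding Ric_def ricci_def
      by (simp add: r gis sum_negf mult.commute)
  qed
  have t1: "(\<Sum>k\<in>UNIV. \<Sum>m\<in>UNIV. gi k m * (g m j * T k l)) = T j l" for T :: "'n tensor2"
  proof -
    have "(\<Sum>k\<in>UNIV. \<Sum>m\<in>UNIV. gi k m * (g m j * T k l)) = (\<Sum>k\<in>UNIV. T k l * (\<Sum>m\<in>UNIV. gi k m * g m j))"
      by (simp add: sum_distrib_left algebra_simps)
    then show ?thesis by (simp add: gig)
  qed
  have t2: "(\<Sum>k\<in>UNIV. \<Sum>m\<in>UNIV. gi k m * (g m k * T j l)) = n * T j l" for T :: "'n tensor2"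
  proof -
    have "(\<Sum>k\<in>UNIV. \<Sum>m\<in>UNIV. gi k m * (g m k * T j l)) = T j l * (\<Sum>k\<in>UNIV. (\<Sum>m\<in>UNIV. gi k m * g m k))"
      by (simp add: sum_distrib_left algebra_simps)
    then show ?thesis by (simp add: gig n_def)
  qed
  have gig2: "\<And>m l. (\<Sum>k\<in>UNIV. gi k m * g k l) = (if m = l then 1 else 0)"
    using gig by (simp add: gis gs)
  have t3: "(\<Sum>k\<in>UNIV. \<Sum>m\<in>UNIV. gi k m * (Ric m j * g k l)) = Ric l j"
  proof -
    have "(\<Sum>k\<in>UNIV. \<Sum>m\<in>UNIV. gi k m * (Ric m j * g k l)) = (\<Sum>m\<in>UNIV. \<Sum>k\<in>UNIV. gi k m * (Ric m j * g k l))"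
      by (rule sum.swap)
    also have "\<dots> = (\<Sum>m\<in>UNIV. Ric m j * (\<Sum>k\<in>UNIV. gi k m * g k l))"
      by (simp add: sum_distrib_left algebra_simps)
    finally show ?thesis by (simp add: gig2)
  qed
  have t4: "(\<Sum>k\<in>UNIV. \<Sum>m\<in>UNIV. gi k m * (Ric m k * g j l)) = S * g j l"
  proof -
    have "(\<Sum>k\<in>UNIV. \<Sum>m\<in>UNIV. gi k m * (Ric m k * g j l)) = g j l * (\<Sum>k\<in>UNIV. \<Sum>m\<in>UNIV. gi k m * Ric m k)"
      by (simp add: sum_distrib_left algebra_simps)
    then show ?thesis unfolding S_def scal_def Ric_def[symmetric] by (simp add: mult.commute)
  qed
  have u1: "(\<Sum>k\<in>UNIV. \<Sum>m\<in>UNIV. gi k m * (g m j * g k l)) = g j l"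
    using t1[of g] .
  have u2: "(\<Sum>k\<in>UNIV. \<Sum>m\<in>UNIV. gi k m * (g m k * g j l)) = n * g j l"
    using t2[of g] .
  have n3: "n \<ge> 3" using dim unfolding n_def by simp
  have a: "n - 2 \<noteq> 0" "n - 1 \<noteq> 0" using n3 by auto
  have f1: "c1 * n = 1 + 2 * c1" unfolding c1_def using a by (simp add: field_simps)
  have f2: "c2 * n = c2 + S * c1" unfolding c1_def c2_def
  proof -
    have "(n - 1) * (n - 2) \<noteq> 0" using a by simp
    then show "S / ((n - 1) * (n - 2)) * n = S / ((n - 1) * (n - 2)) + S * (1 / (n - 2))"
    proof -
      have "S / ((n - 1) * (n - 2)) * (n - 1) = S / (n - 2)" using a by simp
      moreover have "\<And>K T::real. K * (n - 1) = T \<Longrightarrow> K * n = K + T" by (simp add: algebra_simps)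
      ultimately show ?thesis by simp
    qed
  qed
  have e: "Ric j l + c1 * Ric j l - c1 * (n * Ric j l) + c1 * Ric j l - c1 * (S * g j l) - c2 * g j l + c2 * (n * g j l)
     = Ric j l * (1 + 2 * c1 - c1 * n) + g j l * (c2 * n - c2 - S * c1)" by (simp add: algebra_simps)
  have z1: "1 + 2 * c1 - c1 * n = 0" using f1 by linarith
  have z2: "c2 * n - c2 - S * c1 = 0" using f2 by linarith
  have "Ric j l + c1 * Ric j l - c1 * (n * Ric j l) + c1 * Ric l j - c1 * (S * g j l) - c2 * g j l + c2 * (n * g j l) = 0"
    unfolding rs[of l j] e z1 z2 by simp
  then show ?thesis unfolding split tR t1 t2 t3 t4 u1 u2 .
qed


theorem mainTheorem10:
  fixes g gi :: "'p \<Rightarrow> ('n::finite) tensor2"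
    and R :: "'p \<Rightarrow> 'n tensor4"
    and A :: "'p \<Rightarrow> 'n \<Rightarrow> real"
  assumes dim: "CARD('n) \<ge> 3"
    and met: "\<And>p. metric_pair (g p) (gi p)"
    and curv: "\<And>p. curvature_tensor (R p)"
    and not_conf_flat: "\<exists>p j k l m. weyl (g p) (gi p) (R p) j k l m \<noteq> 0"
    and cyc: "\<And>p i j k l m.
        A p i * weyl (g p) (gi p) (R p) j k l m
      + A p j * weyl (g p) (gi p) (R p) k i l m
      + A p k * weyl (g p) (gi p) (R p) i j l m = 0"
  shows "\<forall>p. A p \<noteq> (\<lambda>_. 0) \<longrightarrow>
     (let C = raise4 (gi p) (weyl (g p) (gi p) (R p)) in
        (\<forall>l m q r. (\<Sum>j\<in>UNIV. \<Sum>k\<in>UNIV. C l m j k * C q r k j) = 0) \<and>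
        (\<forall>l m q r s t u v.
           (\<Sum>a\<in>UNIV. \<Sum>b\<in>UNIV. \<Sum>c\<in>UNIV. \<Sum>d\<in>UNIV.
              C l m a b * C q r b c * C s t c d * C u v d a) = 0))"
proof (intro allI impI)
  fix p assume Ap: "A p \<noteq> (\<lambda>_. 0)"
  define w where "w = A p"
  define G where "G = gi p"
  define W where "W = weyl (g p) (gi p) (R p)"
  define Cr where "Cr = raise4 G W"
  define Au where "Au m = (\<Sum>k\<in>UNIV. w k * G k m)" for m
  obtain i0 where i0: "w i0 \<noteq> 0" using Ap unfolding w_def by auto
  have mp: "metric_pair (g p) G" unfolding G_def by (rule met)
  have ct: "curvature_tensor (R p)" by (rule curv)
  have Gs: "\<And>i j. G i j = G j i" using gi_sym[OF mp] .
  have cy: "\<And>i j k l m. w i * W j k l m + w j * W k i l m + w k * W i j l m = 0"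
    unfolding w_def W_def by (rule cyc)
  have an1: "\<And>j k l m. W k j l m = - W j k l m" unfolding W_def G_def[symmetric] using weyl_anti1[OF mp ct] .
  have an2: "\<And>j k l m. W j k m l = - W j k l m" unfolding W_def G_def[symmetric] using weyl_anti2[OF mp ct] .
  have pr: "\<And>j k l m. W l m j k = W j k l m" unfolding W_def G_def[symmetric] using weyl_pair[OF mp ct] .
  have tr1: "\<And>j l. (\<Sum>k\<in>UNIV. \<Sum>m\<in>UNIV. G k m * W j k l m) = 0"
    unfolding W_def G_def[symmetric] using weyl_trace[OF mp ct dim] .
  have tr2: "\<And>i l. (\<Sum>k\<in>UNIV. \<Sum>m\<in>UNIV. G k m * W k i l m) = 0"
  proof -
    fix i l
    have "(\<Sum>k\<in>UNIV. \<Sum>m\<in>UNIV. G k m * W k i l m) = - (\<Sum>k\<in>UNIV. \<Sum>m\<in>UNIV. G k m * W i k l m)"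
      by (simp only: an1[of i] sum_negf mult_minus_right)
    then show "(\<Sum>k\<in>UNIV. \<Sum>m\<in>UNIV. G k m * W k i l m) = 0" using tr1 by simp
  qed
  have P4: "\<And>i j l. (\<Sum>m\<in>UNIV. Au m * W i j l m) = 0"
  proof -
    fix i j l
    have "0 = (\<Sum>k\<in>UNIV. \<Sum>m\<in>UNIV. G k m * (w i * W j k l m + w j * W k i l m + w k * W i j l m))"
      by (simp add: cy)
    also have "\<dots> = w i * (\<Sum>k\<in>UNIV. \<Sum>m\<in>UNIV. G k m * W j k l m)
        + w j * (\<Sum>k\<in>UNIV. \<Sum>m\<in>UNIV. G k m * W k i l m)
        + (\<Sum>k\<in>UNIV. \<Sum>m\<in>UNIV. w k * G k m * W i j l m)"
      by (simp add: sum.distrib sum_distrib_left algebra_simps)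
    also have "\<dots> = (\<Sum>k\<in>UNIV. \<Sum>m\<in>UNIV. w k * G k m * W i j l m)"
      by (simp add: tr1 tr2)
    also have "\<dots> = (\<Sum>m\<in>UNIV. \<Sum>k\<in>UNIV. w k * G k m * W i j l m)"
      by (rule sum.swap)
    also have "\<dots> = (\<Sum>m\<in>UNIV. Au m * W i j l m)"
      unfolding Au_def by (simp add: sum_distrib_right)
    finally show "(\<Sum>m\<in>UNIV. Au m * W i j l m) = 0" by simp
  qed
  have Q4: "\<And>q r k. (\<Sum>j\<in>UNIV. w j * Cr q r k j) = 0"
  proof -
    fix q r k
    have "(\<Sum>j\<in>UNIV. w j * Cr q r k j) = (\<Sum>j\<in>UNIV. \<Sum>y\<in>UNIV. w j * W q r k y * G j y)"
      unfolding Cr_def raise4_def by (simp add: sum_distrib_left algebra_simps Gs)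
    also have "\<dots> = (\<Sum>y\<in>UNIV. \<Sum>j\<in>UNIV. w j * W q r k y * G j y)" by (rule sum.swap)
    also have "\<dots> = (\<Sum>y\<in>UNIV. Au y * W q r k y)"
      unfolding Au_def by (simp add: sum_distrib_right sum_distrib_left mult.commute mult.left_commute)
    finally show "(\<Sum>j\<in>UNIV. w j * Cr q r k j) = 0" by (simp add: P4)
  qed
  have Q3: "\<And>q r j. (\<Sum>k\<in>UNIV. Au k * Cr q r k j) = 0"
  proof -
    fix q r j
    have "(\<Sum>k\<in>UNIV. Au k * Cr q r k j) = (\<Sum>k\<in>UNIV. \<Sum>y\<in>UNIV. Au k * W q r k y * G y j)"
      unfolding Cr_def raise4_def by (simp add: sum_distrib_left algebra_simps)
    also have "\<dots> = (\<Sum>y\<in>UNIV. \<Sum>k\<in>UNIV. Au k * W q r k y * G y j)" by (rule sum.swap)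
    also have "\<dots> = (\<Sum>y\<in>UNIV. - G y j * (\<Sum>k\<in>UNIV. Au k * W q r y k))"
    proof (rule sum.cong[OF refl])
      fix y
      have "\<And>k. W q r k y = - W q r y k" using an2 .
      then show "(\<Sum>k\<in>UNIV. Au k * W q r k y * G y j) = - G y j * (\<Sum>k\<in>UNIV. Au k * W q r y k)"
        by (simp add: sum_distrib_left algebra_simps sum_negf)
    qed
    finally show "(\<Sum>k\<in>UNIV. Au k * Cr q r k j) = 0" by (simp add: P4)
  qed
  have D: "\<And>l m j k. w i0 * Cr l m j k = w j * (- (\<Sum>x\<in>UNIV. W x i0 l m * G x k)) + Au k * (- W i0 j l m)"
  proof -
    fix l m j k
    have e: "w i0 * W l m j x = - w j * W x i0 l m - w x * W i0 j l m" for x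
      using cy[of i0 j x l m] pr[of j x l m] by (simp add: algebra_simps)
    have "w i0 * Cr l m j k = (\<Sum>x\<in>UNIV. (w i0 * W l m j x) * G x k)"
      unfolding Cr_def raise4_def by (simp add: sum_distrib_left algebra_simps)
    also have "\<dots> = (\<Sum>x\<in>UNIV. (- w j * W x i0 l m - w x * W i0 j l m) * G x k)"
      by (simp add: e)
    also have "\<dots> = w j * (- (\<Sum>x\<in>UNIV. W x i0 l m * G x k)) + Au k * (- W i0 j l m)"
      unfolding Au_def by (simp add: sum_subtractf sum_distrib_left sum_distrib_right algebra_simps sum_negf)
    finally show "w i0 * Cr l m j k = w j * (- (\<Sum>x\<in>UNIV. W x i0 l m * G x k)) + Au k * (- W i0 j l m)" .
  qed
  have C1: "(\<Sum>j\<in>UNIV. \<Sum>k\<in>UNIV. Cr l m j k * Cr q r k j) = 0" for l m q r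
  proof -
    have "w i0 * (\<Sum>j\<in>UNIV. \<Sum>k\<in>UNIV. Cr l m j k * Cr q r k j)
       = (\<Sum>j\<in>UNIV. \<Sum>k\<in>UNIV. (w i0 * Cr l m j k) * Cr q r k j)"
      by (simp add: sum_distrib_left mult.assoc)
    also have "\<dots> = 0"
      by (rule contract2[OF D Q4 Q3])
    finally show ?thesis using i0 by simp
  qed
  have C2: "(\<Sum>a\<in>UNIV. \<Sum>b\<in>UNIV. \<Sum>c\<in>UNIV. \<Sum>d\<in>UNIV.
              Cr l m a b * Cr q r b c * Cr s t c d * Cr u v d a) = 0" for l m q r s t u v
  proof -
    have "w i0 * (\<Sum>a\<in>UNIV. \<Sum>b\<in>UNIV. \<Sum>c\<in>UNIV. \<Sum>d\<in>UNIV.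
              Cr l m a b * Cr q r b c * Cr s t c d * Cr u v d a)
       = (\<Sum>a\<in>UNIV. \<Sum>b\<in>UNIV. \<Sum>c\<in>UNIV. \<Sum>d\<in>UNIV.
              (w i0 * Cr l m a b) * Cr q r b c * Cr s t c d * Cr u v d a)"
      by (simp add: sum_distrib_left mult.assoc)
    also have "\<dots> = 0"
      by (rule contract4[OF D Q4 Q3])
    finally show ?thesis using i0 by simp
  qed
  show "let C = raise4 (gi p) (weyl (g p) (gi p) (R p)) in
        (\<forall>l m q r. (\<Sum>j\<in>UNIV. \<Sum>k\<in>UNIV. C l m j k * C q r k j) = 0) \<and>
        (\<forall>l m q r s t u v.
           (\<Sum>a\<in>UNIV. \<Sum>b\<in>UNIV. \<Sum>c\<in>UNIV. \<Sum>d\<in>UNIV.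
              C l m a b * C q r b c * C s t c d * C u v d a) = 0)"
    unfolding Let_def Cr_def[symmetric, unfolded G_def W_def] using C1 C2 by blast
qed

end
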